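(* The map $\zeta\mapsto z(\zeta)=h_E(\zeta)+ih_N(\zeta)-h_W(\zeta)-ih_S(\zeta)$ is an orientation-preserving diffeomorphism from the unit disc $\mathbb D$ onto $\diamondsuit=\{x+iy:|x|+|y|<1\}$.
   Context: $\gamma_E=(e^{-i\pi/4},e^{i\pi/4})$, $\gamma_N=(e^{i\pi/4},e^{3i\pi/4})$, $\gamma_W=(e^{3i\pi/4},e^{5i\pi/4})$, $\gamma_S=(e^{5i\pi/4},e^{7i\pi/4})$ are the four counterclockwise boundary arcs of the unit disc $\mathbb D$, and $h_E,h_N,h_W,h_S$ are their harmonic measures in $\mathbb D$: for $\alpha<\beta<\alpha+2\pi$, $\mathrm{hm}_{\mathbb D}(\zeta;(e^{i\alpha},e^{i\beta}))=\tfrac1\pi\big(\arg(e^{i\beta}-\zeta)-\arg(e^{i\alpha}-\zeta)\big)-\tfrac1{2\pi}(\beta-\alpha)$. *)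

theory Defs
  imports "HOL-Analysis.Analysis"
begin

text \<open>Harmonic measure in the unit disc of the arc from cis alpha counterclockwise to
  cis beta (with alpha < beta < alpha + 2 pi).  The difference
  arg(cis beta - z) - arg(cis alpha - z) (continuous branch) is the counterclockwise angle
  from cis alpha - z to cis beta - z, which lies in (0, 2 pi) for z in the disc; it is
  Arg2pi of the quotient.\<close>
definition hm_disc :: "complex \<Rightarrow> real \<Rightarrow> real \<Rightarrow> real" where
  "hm_disc z \<alpha> \<beta> =
     (1 / pi) * Arg2pi ((cis \<beta> - z) / (cis \<alpha> - z)) - (\<beta> - \<alpha>) / (2 * pi)"

definition h_E :: "complex \<Rightarrow> real" where "h_E z = hm_disc z (- pi/4) (pi/4)"
definition h_N :: "complex \<Rightarrow> real" where "h_N z = hm_disc z (pi/4) (3*pi/4)"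
definition h_W :: "complex \<Rightarrow> real" where "h_W z = hm_disc z (3*pi/4) (5*pi/4)"
definition h_S :: "complex \<Rightarrow> real" where "h_S z = hm_disc z (5*pi/4) (7*pi/4)"

definition zmap :: "complex \<Rightarrow> complex" where
  "zmap \<zeta> = of_real (h_E \<zeta>) + \<i> * of_real (h_N \<zeta>) - of_real (h_W \<zeta>) - \<i> * of_real (h_S \<zeta>)"

definition diamond :: "complex set" where
  "diamond = {w. \<bar>Re w\<bar> + \<bar>Im w\<bar> < 1}"

definition dir_deriv :: "complex \<Rightarrow> (complex \<Rightarrow> complex) \<Rightarrow> complex \<Rightarrow> complex" where
  "dir_deriv v f x = vector_derivative (\<lambda>t::real. f (x + of_real t * v)) (at 0)"

definition smooth_on :: "complex set \<Rightarrow> (complex \<Rightarrow> complex) \<Rightarrow> bool" where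
  "smooth_on S f \<longleftrightarrow> open S \<and>
     (\<forall>ds :: complex list. continuous_on S (foldr dir_deriv ds f) \<and>
        (\<forall>x\<in>S. foldr dir_deriv ds f differentiable (at x)))"

definition jac_det :: "(complex \<Rightarrow> complex) \<Rightarrow> real" where
  "jac_det L = Re (L 1) * Im (L \<i>) - Im (L 1) * Re (L \<i>)"

definition orientation_preserving_diffeo ::
  "(complex \<Rightarrow> complex) \<Rightarrow> complex set \<Rightarrow> complex set \<Rightarrow> bool" where
  "orientation_preserving_diffeo f S T \<longleftrightarrow>
     bij_betw f S T \<and> smooth_on S f \<and> smooth_on T (inv_into S f) \<and>
     (\<forall>x\<in>S. jac_det (frechet_derivative f (at x)) > 0)"

end

theory Submission
  imports Defs
begin



inductive sm :: "complex set \<Rightarrow> (complex \<Rightarrow> real) \<Rightarrow> bool" for S where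
  sm_const: "sm S (\<lambda>z. c)"
| sm_Re: "sm S Re"
| sm_Im: "sm S Im"
| sm_add: "sm S f \<Longrightarrow> sm S g \<Longrightarrow> sm S (\<lambda>z. f z + g z)"
| sm_mult: "sm S f \<Longrightarrow> sm S g \<Longrightarrow> sm S (\<lambda>z. f z * g z)"
| sm_inverse: "sm S f \<Longrightarrow> (\<forall>z\<in>S. f z \<noteq> 0) \<Longrightarrow> sm S (\<lambda>z. inverse (f z))"
| sm_arctan: "sm S f \<Longrightarrow> sm S (\<lambda>z. arctan (f z))"
| sm_sin: "sm S f \<Longrightarrow> sm S (\<lambda>z. sin (f z))"
| sm_cos: "sm S f \<Longrightarrow> sm S (\<lambda>z. cos (f z))"
| sm_tan: "sm S f \<Longrightarrow> (\<forall>z\<in>S. cos (f z) \<noteq> 0) \<Longrightarrow> sm S (\<lambda>z. tan (f z))"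
| sm_sqrt: "sm S f \<Longrightarrow> (\<forall>z\<in>S. f z > 0) \<Longrightarrow> sm S (\<lambda>z. sqrt (f z))"
| sm_cong: "sm S f \<Longrightarrow> (\<forall>z\<in>S. f z = g z) \<Longrightarrow> sm S g"

lemmas smI = sm_const sm_Re sm_Im sm_add sm_mult sm_inverse sm_arctan sm_sin sm_cos sm_tan sm_sqrt

lemma sm_deriv:
  assumes S: "open S" and "sm S f"
  shows "\<exists>F. (\<forall>x\<in>S. (f has_derivative F x) (at x)) \<and> (\<forall>v. sm S (\<lambda>x. F x v))"
  using assms(2)
proof induction
  case (sm_const c)
  show ?case by (rule exI[of _ "\<lambda>x v. 0"]) (auto intro: smI)
next
  case sm_Re
  show ?case by (rule exI[of _ "\<lambda>x v. Re v"])
      (auto intro: smI bounded_linear.has_derivative[OF bounded_linear_Re, OF has_derivative_ident])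
next
  case sm_Im
  show ?case by (rule exI[of _ "\<lambda>x v. Im v"])
      (auto intro: smI bounded_linear.has_derivative[OF bounded_linear_Im, OF has_derivative_ident])
next
  case (sm_add f g)
  then obtain F G where F: "\<forall>x\<in>S. (f has_derivative F x) (at x)" "\<forall>v. sm S (\<lambda>x. F x v)"
    and G: "\<forall>x\<in>S. (g has_derivative G x) (at x)" "\<forall>v. sm S (\<lambda>x. G x v)" by blast
  show ?case by (rule exI[of _ "\<lambda>x v. F x v + G x v"]) (use F G in \<open>auto intro: smI has_derivative_add\<close>)
next
  case (sm_mult f g)
  then obtain F G where F: "\<forall>x\<in>S. (f has_derivative F x) (at x)" "\<forall>v. sm S (\<lambda>x. F x v)"
    and G: "\<forall>x\<in>S. (g has_derivative G x) (at x)" "\<forall>v. sm S (\<lambda>x. G x v)" by blast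
  show ?case by (rule exI[of _ "\<lambda>x v. f x * G x v + F x v * g x"])
     (use F G sm_mult in \<open>auto intro!: smI has_derivative_mult\<close>)
next
  case (sm_inverse f)
  then obtain F where F: "\<forall>x\<in>S. (f has_derivative F x) (at x)" "\<forall>v. sm S (\<lambda>x. F x v)" by blast
  show ?case
  proof (rule exI[of _ "\<lambda>x v. F x v * (- (inverse (f x) ^ Suc (Suc 0)))"], intro conjI ballI allI)
    fix x assume "x \<in> S"
    then show "((\<lambda>z. inverse (f z)) has_derivative (\<lambda>v. F x v * (- (inverse (f x) ^ Suc (Suc 0))))) (at x)"
      using F sm_inverse by (intro DERIV_compose_FDERIV[where f=inverse] DERIV_inverse) auto
  next
    fix v
    have "sm S (\<lambda>x. F x v * ((\<lambda>z. -1) x * (inverse (f x) * inverse (f x))))"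
      using F sm_inverse by (intro smI) auto
    then show "sm S (\<lambda>x. F x v * (- (inverse (f x) ^ Suc (Suc 0))))" by simp
  qed
next
  case (sm_arctan f)
  then obtain F where F: "\<forall>x\<in>S. (f has_derivative F x) (at x)" "\<forall>v. sm S (\<lambda>x. F x v)" by blast
  show ?case
  proof (rule exI[of _ "\<lambda>x v. F x v * inverse (1 + (f x)\<^sup>2)"], intro conjI ballI allI)
    fix x assume "x \<in> S"
    then show "((\<lambda>z. arctan (f z)) has_derivative (\<lambda>v. F x v * inverse (1 + (f x)\<^sup>2))) (at x)"
      using F by (intro DERIV_compose_FDERIV[where f=arctan] DERIV_arctan) auto
  next
    fix v
    have nz: "\<forall>z\<in>S. 1 + f z * f z \<noteq> 0"
    proof
      fix z have "0 \<le> f z * f z" by simp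
      then show "1 + f z * f z \<noteq> 0" by linarith
    qed
    have "sm S (\<lambda>x. F x v * inverse (1 + f x * f x))"
      using F sm_arctan nz by (intro smI) (auto intro: smI)
    then show "sm S (\<lambda>x. F x v * inverse (1 + (f x)\<^sup>2))" by (simp add: power2_eq_square)
  qed
next
  case (sm_sin f)
  then obtain F where F: "\<forall>x\<in>S. (f has_derivative F x) (at x)" "\<forall>v. sm S (\<lambda>x. F x v)" by blast
  show ?case
  proof (rule exI[of _ "\<lambda>x v. F x v * cos (f x)"], intro conjI ballI allI)
    fix x assume "x \<in> S"
    then show "((\<lambda>z. sin (f z)) has_derivative (\<lambda>v. F x v * cos (f x))) (at x)"
      using F by (intro DERIV_compose_FDERIV[where f=sin] DERIV_sin) auto
  next
    fix v show "sm S (\<lambda>x. F x v * cos (f x))" using F sm_sin by (auto intro!: smI)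
  qed
next
  case (sm_cos f)
  then obtain F where F: "\<forall>x\<in>S. (f has_derivative F x) (at x)" "\<forall>v. sm S (\<lambda>x. F x v)" by blast
  show ?case
  proof (rule exI[of _ "\<lambda>x v. F x v * (- sin (f x))"], intro conjI ballI allI)
    fix x assume "x \<in> S"
    then show "((\<lambda>z. cos (f z)) has_derivative (\<lambda>v. F x v * (- sin (f x)))) (at x)"
      using F by (intro DERIV_compose_FDERIV[where f=cos] DERIV_cos) auto
  next
    fix v
    have "sm S (\<lambda>x. F x v * ((\<lambda>z. -1) x * sin (f x)))" using F sm_cos by (intro smI) (auto intro!: smI)
    then show "sm S (\<lambda>x. F x v * (- sin (f x)))" by simp
  qed
next
  case (sm_tan f)
  then obtain F where F: "\<forall>x\<in>S. (f has_derivative F x) (at x)" "\<forall>v. sm S (\<lambda>x. F x v)" by blast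
  show ?case
  proof (rule exI[of _ "\<lambda>x v. F x v * inverse ((cos (f x))\<^sup>2)"], intro conjI ballI allI)
    fix x assume "x \<in> S"
    then show "((\<lambda>z. tan (f z)) has_derivative (\<lambda>v. F x v * inverse ((cos (f x))\<^sup>2))) (at x)"
      using F sm_tan by (intro DERIV_compose_FDERIV[where f=tan] DERIV_tan) auto
  next
    fix v
    have "sm S (\<lambda>x. F x v * inverse (cos (f x) * cos (f x)))"
      using F sm_tan by (intro smI) (auto intro: smI)
    then show "sm S (\<lambda>x. F x v * inverse ((cos (f x))\<^sup>2))" by (simp add: power2_eq_square)
  qed
next
  case (sm_sqrt f)
  then obtain F where F: "\<forall>x\<in>S. (f has_derivative F x) (at x)" "\<forall>v. sm S (\<lambda>x. F x v)" by blast
  show ?case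
  proof (rule exI[of _ "\<lambda>x v. F x v * (inverse (sqrt (f x)) / 2)"], intro conjI ballI allI)
    fix x assume "x \<in> S"
    then show "((\<lambda>z. sqrt (f z)) has_derivative (\<lambda>v. F x v * (inverse (sqrt (f x)) / 2))) (at x)"
      using F sm_sqrt by (intro DERIV_compose_FDERIV[where f=sqrt] DERIV_real_sqrt) auto
  next
    fix v
    have "sm S (\<lambda>x. F x v * (inverse (sqrt (f x)) * (\<lambda>z. 1/2) x))"
      using F sm_sqrt by (intro smI) (auto intro: smI)
    then show "sm S (\<lambda>x. F x v * (inverse (sqrt (f x)) / 2))" by simp
  qed
next
  case (sm_cong f g)
  then obtain F where F: "\<forall>x\<in>S. (f has_derivative F x) (at x)" "\<forall>v. sm S (\<lambda>x. F x v)" by blast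
  have "\<forall>x\<in>S. (g has_derivative F x) (at x)"
  proof
    fix x assume x: "x \<in> S"
    have d: "(f has_derivative F x) (at x)" using F x by blast
    have e: "\<And>y. y \<in> S \<Longrightarrow> f y = g y" using sm_cong.hyps by blast
    show "(g has_derivative F x) (at x)"
      by (rule has_derivative_transform_within_open[OF d S x e])
  qed
  then show ?case using F(2) by blast
qed

lemma complex_has_derivative:
  assumes "(f has_derivative Fr) (at x)" "(g has_derivative Fi) (at x)"
  shows "((\<lambda>z. Complex (f z) (g z)) has_derivative (\<lambda>v. Complex (Fr v) (Fi v))) (at x)"
proof -
  have "((\<lambda>z. of_real (f z) + \<i> * of_real (g z)) has_derivative
        (\<lambda>v. of_real (Fr v) + \<i> * of_real (Fi v))) (at x)"
    by (intro derivative_intros assms)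
  then show ?thesis by (simp add: Complex_eq)
qed

lemma sm_complex_deriv:
  assumes S: "open S" and r: "sm S (\<lambda>z. Re (h z))" and i: "sm S (\<lambda>z. Im (h z))"
  shows "\<exists>L. (\<forall>x\<in>S. (h has_derivative L x) (at x)) \<and>
             (\<forall>v. sm S (\<lambda>x. Re (L x v)) \<and> sm S (\<lambda>x. Im (L x v)))"
proof -
  obtain Fr where Fr: "\<forall>x\<in>S. ((\<lambda>z. Re (h z)) has_derivative Fr x) (at x)" "\<forall>v. sm S (\<lambda>x. Fr x v)"
    using sm_deriv[OF S r] by blast
  obtain Fi where Fi: "\<forall>x\<in>S. ((\<lambda>z. Im (h z)) has_derivative Fi x) (at x)" "\<forall>v. sm S (\<lambda>x. Fi x v)"
    using sm_deriv[OF S i] by blast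
  have "\<forall>x\<in>S. (h has_derivative (\<lambda>v. Complex (Fr x v) (Fi x v))) (at x)"
  proof
    fix x assume x: "x \<in> S"
    have "((\<lambda>z. Complex (Re (h z)) (Im (h z))) has_derivative (\<lambda>v. Complex (Fr x v) (Fi x v))) (at x)"
      using Fr Fi x by (intro complex_has_derivative) auto
    then show "(h has_derivative (\<lambda>v. Complex (Fr x v) (Fi x v))) (at x)" by simp
  qed
  then show ?thesis using Fr(2) Fi(2)
    by (intro exI[of _ "\<lambda>x v. Complex (Fr x v) (Fi x v)"]) simp
qed

lemma dir_deriv_eq:
  assumes S: "open S" and x: "x \<in> S" and d: "(h has_derivative L) (at x)"
    and eq: "\<forall>y\<in>S. k y = h y"
  shows "dir_deriv v k x = L v"
proof -
  define l where "l = (\<lambda>t::real. x + of_real t * v)"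
  have dl: "(l has_derivative (\<lambda>t. of_real t * v)) (at 0)"
    unfolding l_def by (intro derivative_eq_intros) auto
  have l0: "l 0 = x" by (simp add: l_def)
  have dh: "(h has_derivative L) (at (l 0))" using d l0 by simp
  have "((h \<circ> l) has_derivative (L \<circ> (\<lambda>t. of_real t * v))) (at 0)"
    by (rule diff_chain_at[OF dl dh])
  moreover have "L \<circ> (\<lambda>t. of_real t * v) = (\<lambda>t. t *\<^sub>R L v)"
  proof
    fix t
    have lin: "linear L" using has_derivative_bounded_linear[OF d] bounded_linear.linear by blast
    have "L (of_real t * v) = L (t *\<^sub>R v)" by (simp add: scaleR_conv_of_real)
    also have "\<dots> = t *\<^sub>R L v" using lin by (simp add: linear_iff)
    finally show "(L \<circ> (\<lambda>t. of_real t * v)) t = t *\<^sub>R L v" by simp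
  qed
  ultimately have "((h \<circ> l) has_vector_derivative L v) (at 0)"
    by (simp add: has_vector_derivative_def)
  moreover have "open (l -` S)"
    unfolding l_def by (intro continuous_open_vimage S) (intro continuous_intros)
  moreover have "0 \<in> l -` S" using x l0 by simp
  moreover have "\<And>t. t \<in> l -` S \<Longrightarrow> (h \<circ> l) t = (\<lambda>t. k (x + of_real t * v)) t"
    using eq by (simp add: l_def)
  ultimately have "((\<lambda>t. k (x + of_real t * v)) has_vector_derivative L v) (at 0)"
    by (rule has_vector_derivative_transform_within_open)
  then show ?thesis unfolding dir_deriv_def by (rule vector_derivative_at)
qed

lemma sm_smooth_on:
  assumes S: "open S" and r: "sm S (\<lambda>z. Re (h z))" and i: "sm S (\<lambda>z. Im (h z))"
  shows "smooth_on S h"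
proof -
  have P: "\<exists>g. sm S (\<lambda>z. Re (g z)) \<and> sm S (\<lambda>z. Im (g z)) \<and> (\<forall>x\<in>S. foldr dir_deriv ds h x = g x)" for ds
  proof (induction ds)
    case Nil
    then show ?case using r i by auto
  next
    case (Cons v ds)
    then obtain g where g: "sm S (\<lambda>z. Re (g z))" "sm S (\<lambda>z. Im (g z))"
      "\<forall>x\<in>S. foldr dir_deriv ds h x = g x" by blast
    obtain L where L: "\<forall>x\<in>S. (g has_derivative L x) (at x)"
      "\<forall>v. sm S (\<lambda>x. Re (L x v)) \<and> sm S (\<lambda>x. Im (L x v))"
      using sm_complex_deriv[OF S g(1,2)] by blast
    have "\<forall>x\<in>S. foldr dir_deriv (v # ds) h x = L x v"
    proof
      fix x assume x: "x \<in> S"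
      have "foldr dir_deriv (v # ds) h x = dir_deriv v (foldr dir_deriv ds h) x" by simp
      also have "\<dots> = L x v" using dir_deriv_eq[OF S x _ g(3)] L(1) x by blast
      finally show "foldr dir_deriv (v # ds) h x = L x v" .
    qed
    then show ?case using L(2) by (intro exI[of _ "\<lambda>x. L x v"]) blast
  qed
  have "continuous_on S (foldr dir_deriv ds h) \<and> (\<forall>x\<in>S. foldr dir_deriv ds h differentiable (at x))" for ds
  proof -
    obtain g where g: "sm S (\<lambda>z. Re (g z))" "sm S (\<lambda>z. Im (g z))"
      "\<forall>x\<in>S. foldr dir_deriv ds h x = g x" using P by blast
    obtain L where L: "\<forall>x\<in>S. (g has_derivative L x) (at x)"
      using sm_complex_deriv[OF S g(1,2)] by blast
    have D: "(foldr dir_deriv ds h has_derivative L x) (at x)" if x: "x \<in> S" for x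
    proof -
      have e: "\<And>y. y \<in> S \<Longrightarrow> g y = foldr dir_deriv ds h y" using g(3) by simp
      have "(g has_derivative L x) (at x)" using L x by blast
      then show ?thesis by (rule has_derivative_transform_within_open[OF _ S x e])
    qed
    have "continuous_on S (foldr dir_deriv ds h)"
      using D has_derivative_continuous continuous_at_imp_continuous_on by blast
    moreover have "\<forall>x\<in>S. foldr dir_deriv ds h differentiable (at x)"
      using D differentiable_def by blast
    ultimately show ?thesis by blast
  qed
  then show ?thesis unfolding smooth_on_def using S by blast
qed



lemma cos_3pi4: "cos (3*pi/4) = - sqrt 2 / 2"
proof -
  have "cos (3*pi/4) = cos (pi - pi/4)" by (rule arg_cong[where f=cos]) simp
  also have "\<dots> = - sqrt 2/2" by (simp only: cos_diff cos_pi sin_pi cos_45 sin_45)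
  finally show ?thesis .
qed

lemma sin_3pi4: "sin (3*pi/4) = sqrt 2 / 2"
proof -
  have "sin (3*pi/4) = sin (pi - pi/4)" by (rule arg_cong[where f=sin]) simp
  also have "\<dots> = sqrt 2/2" by (simp only: sin_diff cos_pi sin_pi cos_45 sin_45)
  finally show ?thesis .
qed

lemma theta_cs:
  fixes N D :: real assumes D: "D > 0"
  shows "cos (3*pi/4 - arctan (N/D)) = (N - D)/(sqrt 2 * sqrt (D^2 + N^2))"
    and "sin (3*pi/4 - arctan (N/D)) = (N + D)/(sqrt 2 * sqrt (D^2 + N^2))"
proof -
  define M where "M = sqrt (D^2 + N^2)"
  have Mpos: "M > 0" using D unfolding M_def by (simp add: add_pos_nonneg)
  have "1 + (N/D)^2 = (D^2+N^2)/D^2" using D by (simp add: field_simps power2_eq_square)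
  hence s: "sqrt (1 + (N/D)^2) = M / D" using D by (simp add: M_def real_sqrt_divide)
  have ca: "cos (arctan (N/D)) = D/M" using s D by (simp add: cos_arctan)
  have sa: "sin (arctan (N/D)) = N/M" using s D by (simp add: sin_arctan)
  have s2: "sqrt 2 * sqrt 2 = (2::real)" by simp
  show "cos (3*pi/4 - arctan (N/D)) = (N - D)/(sqrt 2 * M)"
    unfolding cos_diff cos_3pi4 sin_3pi4 ca sa using Mpos s2
    by (simp add: field_simps)
  show "sin (3*pi/4 - arctan (N/D)) = (N + D)/(sqrt 2 * M)"
    unfolding sin_diff cos_3pi4 sin_3pi4 ca sa using Mpos s2
    by (simp add: field_simps)
qed

lemma quarter:
  fixes t :: complex
  assumes t: "norm t < 1"
  shows "Arg2pi ((\<i> - t)/(1 - t)) =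
    3*pi/4 - arctan ((1 + (Re t)^2 + (Im t)^2 - 2*(Re t + Im t)) / (1 - (Re t)^2 - (Im t)^2))"
proof -
  define x where "x = Re t"
  define y where "y = Im t"
  define N where "N = 1 + x^2 + y^2 - 2*(x + y)"
  define D where "D = 1 - x^2 - y^2"
  define M where "M = sqrt (D^2 + N^2)"
  define Q where "Q = (1-x)^2 + y^2"
  have xy: "x^2 + y^2 < 1"
  proof -
    have "x^2 + y^2 = (norm t)^2" by (simp add: x_def y_def cmod_power2)
    also have "\<dots> < 1" using t by (simp add: power_less_one_iff abs_less_iff)
    finally show ?thesis .
  qed
  hence D: "D > 0" by (simp add: D_def)
  have Mpos: "M > 0" using D unfolding M_def by (simp add: add_pos_nonneg)
  have "x^2 < 1" using xy by (smt (verit) zero_le_power2)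
  hence "x < 1" by (simp add: abs_square_less_1)
  hence Q: "Q > 0" unfolding Q_def by (smt (verit) zero_le_power2 zero_less_power2)
  have s2: "sqrt 2 * sqrt 2 = (2::real)" by simp
  define r where "r = sqrt 2 * M / (2 * Q)"
  have r: "r > 0" using Mpos Q by (simp add: r_def)
  have th: "0 \<le> 3*pi/4 - arctan (N/D)" "3*pi/4 - arctan (N/D) < 2*pi"
    using arctan_bounded[of "N/D"] by auto
  have "of_real r * exp (\<i> * of_real (3*pi/4 - arctan (N/D))) = (\<i> - t)/(1 - t)"
  proof (rule complex_eqI)
    have 1: "Re ((\<i> - t)/(1 - t)) = (x^2 + y^2 - x - y) / Q"
    proof -
      have "Re ((\<i> - t)/(1 - t)) = ((-x)*(1-x) + (1-y)*(-y))/((1-x)^2 + (-y)^2)"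
        unfolding Re_divide by (simp add: x_def y_def)
      also have "\<dots> = (x^2 + y^2 - x - y) / Q"
        unfolding Q_def by (simp add: power2_eq_square algebra_simps)
      finally show ?thesis .
    qed
    have 2: "Im ((\<i> - t)/(1 - t)) = (1 - x - y) / Q"
    proof -
      have "Im ((\<i> - t)/(1 - t)) = ((1-y)*(1-x) - (-x)*(-y))/((1-x)^2 + (-y)^2)"
        unfolding Im_divide by (simp add: x_def y_def)
      also have "\<dots> = (1 - x - y) / Q"
        unfolding Q_def by (simp add: power2_eq_square algebra_simps)
      finally show ?thesis .
    qed
    have e: "exp (\<i> * of_real (3*pi/4 - arctan (N/D))) = cis (3*pi/4 - arctan (N/D))"
      by (simp add: cis_conv_exp)
    have rc: "r * ((N - D)/(sqrt 2 * M)) = (x^2 + y^2 - x - y) / Q"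
    proof -
      have "r * ((N - D)/(sqrt 2 * M)) = (N - D) / (2*Q)"
        using Mpos Q by (simp add: r_def)
      also have "\<dots> = (x^2 + y^2 - x - y) / Q" using Q by (simp add: N_def D_def field_simps)
      finally show ?thesis .
    qed
    have rs: "r * ((N + D)/(sqrt 2 * M)) = (1 - x - y) / Q"
    proof -
      have "r * ((N + D)/(sqrt 2 * M)) = (N + D) / (2*Q)"
        using Mpos Q by (simp add: r_def)
      also have "\<dots> = (1 - x - y) / Q" using Q by (simp add: N_def D_def field_simps)
      finally show ?thesis .
    qed
    show "Re (of_real r * exp (\<i> * of_real (3*pi/4 - arctan (N/D)))) = Re ((\<i> - t)/(1 - t))"
      unfolding 1 e using rc by (simp add: theta_cs[OF D] M_def[symmetric])
    show "Im (of_real r * exp (\<i> * of_real (3*pi/4 - arctan (N/D)))) = Im ((\<i> - t)/(1 - t))"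
      unfolding 2 e using rs by (simp add: theta_cs[OF D] M_def[symmetric])
  qed
  from Arg2pi_unique[OF this r th] show ?thesis
    by (simp add: N_def D_def x_def y_def)
qed

lemma hm_quarter:
  assumes z: "norm z < 1" and b: "\<beta> = \<alpha> + pi/2"
  shows "hm_disc z \<alpha> \<beta> = 1/2 - arctan ((1 + (norm z)^2 - 2*(Re z * (cos \<alpha> - sin \<alpha>) + Im z * (cos \<alpha> + sin \<alpha>))) / (1 - (norm z)^2)) / pi"
proof -
  define t where "t = z * cis (-\<alpha>)"
  have nt: "norm t = norm z" by (simp add: t_def norm_mult)
  have cc: "cis (-\<alpha>) * cis \<alpha> = 1" by (simp add: cis_mult)
  have zt: "z = t * cis \<alpha>" by (simp add: t_def mult.assoc cc)
  have cb: "cis \<beta> = \<i> * cis \<alpha>" using b by (simp add: complex_eq_iff cos_add sin_add)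
  have nz: "cis \<alpha> \<noteq> 0" by simp
  have q: "(cis \<beta> - z) / (cis \<alpha> - z) = (\<i> - t)/(1 - t)"
  proof -
    have "\<i> * cis \<alpha> - t * cis \<alpha> = (\<i> - t) * cis \<alpha>" "cis \<alpha> - t * cis \<alpha> = (1 - t) * cis \<alpha>"
      by (simp_all add: algebra_simps)
    then show ?thesis unfolding cb zt using nz by simp
  qed
  have Ret: "Re t = Re z * cos \<alpha> + Im z * sin \<alpha>" by (simp add: t_def cis.ctr)
  have Imt: "Im t = Im z * cos \<alpha> - Re z * sin \<alpha>" by (simp add: t_def cis.ctr)
  have sq: "(Re t)^2 + (Im t)^2 = (norm z)^2" by (metis cmod_power2 nt)
  have Af: "Arg2pi ((cis \<beta> - z) / (cis \<alpha> - z)) =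
     3*pi/4 - arctan ((1 + (norm z)^2 - 2*(Re z * (cos \<alpha> - sin \<alpha>) + Im z * (cos \<alpha> + sin \<alpha>))) / (1 - (norm z)^2))"
  proof -
    have e1: "1 + (Re t)^2 + (Im t)^2 - 2*(Re t + Im t) = 1 + (norm z)^2 - 2*(Re z * (cos \<alpha> - sin \<alpha>) + Im z * (cos \<alpha> + sin \<alpha>))"
      using sq unfolding Ret Imt by (simp add: algebra_simps)
    have e2: "1 - (Re t)^2 - (Im t)^2 = 1 - (norm z)^2" using sq by simp
    have Q: "Arg2pi ((\<i> - t)/(1 - t)) = 3*pi/4 - arctan ((1 + (Re t)^2 + (Im t)^2 - 2*(Re t + Im t)) / (1 - (Re t)^2 - (Im t)^2))"
      by (rule quarter) (simp add: nt z)
    show ?thesis unfolding q using Q unfolding e1 e2 .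
  qed
  have ba: "\<beta> - \<alpha> = pi/2" using b by simp
  have ar: "(1/pi)*(3*pi/4 - a) - (pi/2)/(2*pi) = 1/2 - a/pi" for a
    by (simp add: field_simps)
  show ?thesis unfolding hm_disc_def Af ba ar ..
qed

lemma atan_id:
  fixes K p q :: real
  assumes K: "K^2 = 1 + 2*p^2 + 2*q^2"
  shows "arctan (K + 2*p) - arctan (K - 2*p) = arctan (p + q) + arctan (p - q)"
proof -
  have A: "arctan s = Arg (Complex 1 s)" for s
    using arg_conv_arctan[of "Complex 1 s"] by simp
  have B: "\<bar>Arg (Complex 1 s)\<bar> < pi/2" for s
    using Arg_Re_pos[of "Complex 1 s"] by simp
  have nz: "Complex 1 s \<noteq> 0" for s by (simp add: complex_eq_iff)
  have M: "Arg (Complex 1 s * Complex 1 r) = Arg (Complex 1 s) + Arg (Complex 1 r)" for s r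
    using B[of s] B[of r] by (intro Arg_times nz) auto
  have "arctan (K + 2*p) - arctan (K - 2*p) = arctan (K + 2*p) + arctan (2*p - K)"
    by (simp flip: arctan_minus)
  also have "\<dots> = Arg (Complex 1 (K + 2*p) * Complex 1 (2*p - K))" by (simp add: A M)
  also have "Complex 1 (K + 2*p) * Complex 1 (2*p - K) = of_real 2 * (Complex 1 (p+q) * Complex 1 (p-q))"
    using K by (simp add: complex_eq_iff power2_eq_square algebra_simps)
  also have "Arg \<dots> = Arg (Complex 1 (p+q) * Complex 1 (p-q))" by (rule Arg_times_of_real) simp
  also have "\<dots> = arctan (p + q) + arctan (p - q)" by (simp add: A M)
  finally show ?thesis .
qed

lemma cos_5pi4: "cos (5*pi/4) = - sqrt 2 / 2"
proof -
  have "cos (5*pi/4) = cos (pi + pi/4)" by (rule arg_cong[where f=cos]) simp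
  also have "\<dots> = - sqrt 2/2" by (simp only: cos_add cos_pi sin_pi cos_45 sin_45)
  finally show ?thesis .
qed

lemma sin_5pi4: "sin (5*pi/4) = - sqrt 2 / 2"
proof -
  have "sin (5*pi/4) = sin (pi + pi/4)" by (rule arg_cong[where f=sin]) simp
  also have "\<dots> = - sqrt 2/2" by (simp only: sin_add cos_pi sin_pi cos_45 sin_45)
  finally show ?thesis .
qed

lemma cos_m45: "cos (- pi / 4) = sqrt 2 / 2"
proof -
  have "- pi / 4 = - (pi/4)" by simp
  then show ?thesis by (simp only: cos_minus cos_45)
qed
lemma sin_m45: "sin (- pi / 4) = - sqrt 2 / 2"
proof -
  have "- pi / 4 = - (pi/4)" by simp
  then show ?thesis by (simp only: sin_minus sin_45)
qed

lemma hE: "norm z < 1 \<Longrightarrow> h_E z = 1/2 - arctan ((1 + (norm z)^2 - 2*(sqrt 2 * Re z)) / (1 - (norm z)^2)) / pi"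
  unfolding h_E_def apply (subst hm_quarter, assumption, simp)
  apply (simp only: cos_m45 sin_m45 cos_45 sin_45)
  apply (simp add: ac_simps)
  done
lemma hN: "norm z < 1 \<Longrightarrow> h_N z = 1/2 - arctan ((1 + (norm z)^2 - 2*(sqrt 2 * Im z)) / (1 - (norm z)^2)) / pi"
  unfolding h_N_def apply (subst hm_quarter, assumption, simp)
  apply (simp only: cos_minus sin_minus cos_45 sin_45)
  apply (simp add: ac_simps)
  done
lemma hW: "norm z < 1 \<Longrightarrow> h_W z = 1/2 - arctan ((1 + (norm z)^2 + 2*(sqrt 2 * Re z)) / (1 - (norm z)^2)) / pi"
  unfolding h_W_def apply (subst hm_quarter, assumption, simp)
  apply (simp only: cos_minus sin_minus cos_3pi4 sin_3pi4)
  apply (simp add: ac_simps)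
  done
lemma hS: "norm z < 1 \<Longrightarrow> h_S z = 1/2 - arctan ((1 + (norm z)^2 + 2*(sqrt 2 * Im z)) / (1 - (norm z)^2)) / pi"
  unfolding h_S_def apply (subst hm_quarter, assumption, simp)
  apply (simp only: cos_minus sin_minus cos_5pi4 sin_5pi4)
  apply (simp add: ac_simps)
  done

definition pp :: "complex \<Rightarrow> real" where
  "pp z = sqrt 2 * Re z / (1 - (Re z)^2 - (Im z)^2)"
definition qq :: "complex \<Rightarrow> real" where
  "qq z = sqrt 2 * Im z / (1 - (Re z)^2 - (Im z)^2)"
definition zf :: "complex \<Rightarrow> complex" where
  "zf z = Complex ((arctan (pp z + qq z) + arctan (pp z - qq z)) / pi)
                  ((arctan (pp z + qq z) - arctan (pp z - qq z)) / pi)"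

lemma zmap_eq:
  assumes z: "norm z < 1"
  shows "zmap z = zf z"
proof -
  define n where "n = (norm z)^2"
  define K where "K = (1 + n) / (1 - n)"
  have n: "n = (Re z)^2 + (Im z)^2" by (simp add: n_def cmod_power2)
  have n1: "n < 1" using z by (simp add: n_def power_less_one_iff abs_less_iff)
  hence Dn: "1 - n \<noteq> 0" by simp
  have ppn: "pp z = sqrt 2 * Re z / (1 - n)" by (simp add: pp_def n)
  have qqn: "qq z = sqrt 2 * Im z / (1 - n)" by (simp add: qq_def n)
  have KK: "K^2 = 1 + 2*(pp z)^2 + 2*(qq z)^2"
  proof -
    have s2: "(sqrt 2)^2 = (2::real)" by simp
    have "2*(pp z)^2 + 2*(qq z)^2 = 2*(2*(Re z)^2/(1-n)^2) + 2*(2*(Im z)^2/(1-n)^2)"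
      unfolding ppn qqn by (simp add: power_divide power_mult_distrib)
    also have "\<dots> = 4*((Re z)^2 + (Im z)^2)/(1-n)^2" by (simp add: add_divide_distrib)
    also have "\<dots> = 4*n/(1-n)^2" by (simp only: n)
    finally have A: "2*(pp z)^2 + 2*(qq z)^2 = 4*n/(1-n)^2" .
    have e: "(1+n)^2 = (1-n)^2 + 4*n" by (simp add: power2_eq_square algebra_simps)
    have D2: "(1-n)^2 \<noteq> 0" using Dn by simp
    have "K^2 = ((1-n)^2 + 4*n)/(1-n)^2" unfolding K_def power_divide e ..
    also have "\<dots> = 1 + 4*n/(1-n)^2" using D2 by (simp add: add_divide_distrib)
    finally have "K^2 = 1 + 4*n/(1-n)^2" .
    then show ?thesis using A by simp
  qed
  have KK': "K^2 = 1 + 2*(qq z)^2 + 2*(pp z)^2" using KK by simp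
  have a1: "(1 + n - 2*(sqrt 2 * Re z)) / (1 - n) = K - 2 * pp z"
    unfolding K_def ppn by (simp add: diff_divide_distrib add_divide_distrib)
  have a2: "(1 + n + 2*(sqrt 2 * Re z)) / (1 - n) = K + 2 * pp z"
    unfolding K_def ppn by (simp add: diff_divide_distrib add_divide_distrib)
  have a3: "(1 + n - 2*(sqrt 2 * Im z)) / (1 - n) = K - 2 * qq z"
    unfolding K_def qqn by (simp add: diff_divide_distrib add_divide_distrib)
  have a4: "(1 + n + 2*(sqrt 2 * Im z)) / (1 - n) = K + 2 * qq z"
    unfolding K_def qqn by (simp add: diff_divide_distrib add_divide_distrib)
  have re: "Re (zmap z) = h_E z - h_W z" by (simp add: zmap_def)
  have im: "Im (zmap z) = h_N z - h_S z" by (simp add: zmap_def)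
  have "h_E z = 1/2 - arctan (K - 2 * pp z)/pi" by (simp only: hE[OF z] n_def[symmetric] a1)
  moreover have "h_W z = 1/2 - arctan (K + 2 * pp z)/pi" by (simp only: hW[OF z] n_def[symmetric] a2)
  ultimately have "Re (zmap z) = (arctan (K + 2 * pp z) - arctan (K - 2 * pp z)) / pi"
    unfolding re by (simp add: diff_divide_distrib)
  also have "\<dots> = (arctan (pp z + qq z) + arctan (pp z - qq z)) / pi"
    using atan_id[OF KK] by simp
  finally have R: "Re (zmap z) = Re (zf z)" by (simp add: zf_def)
  have "h_N z = 1/2 - arctan (K - 2 * qq z)/pi" by (simp only: hN[OF z] n_def[symmetric] a3)
  moreover have "h_S z = 1/2 - arctan (K + 2 * qq z)/pi" by (simp only: hS[OF z] n_def[symmetric] a4)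
  ultimately have "Im (zmap z) = (arctan (K + 2 * qq z) - arctan (K - 2 * qq z)) / pi"
    unfolding im by (simp add: diff_divide_distrib)
  also have "\<dots> = (arctan (qq z + pp z) + arctan (qq z - pp z)) / pi"
    using atan_id[OF KK'] by simp
  also have "\<dots> = (arctan (pp z + qq z) - arctan (pp z - qq z)) / pi"
    by (simp add: add.commute arctan_minus[symmetric])
  finally have I: "Im (zmap z) = Im (zf z)" by (simp add: zf_def)
  show ?thesis using R I by (simp add: complex_eq_iff)
qed

definition gA :: "complex \<Rightarrow> real" where "gA w = tan (pi * (Re w + Im w) / 2)"
definition gB :: "complex \<Rightarrow> real" where "gB w = tan (pi * (Re w - Im w) / 2)"
definition gm :: "complex \<Rightarrow> real" where
  "gm w = sqrt (1 + 2 * (((gA w + gB w)/2)^2 + ((gA w - gB w)/2)^2))"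
definition gf :: "complex \<Rightarrow> complex" where
  "gf w = Complex (sqrt 2 * ((gA w + gB w)/2) / (1 + gm w)) (sqrt 2 * ((gA w - gB w)/2) / (1 + gm w))"

lemma zf_in_diamond: "zf z \<in> diamond"
proof -
  define a where "a = arctan (pp z + qq z)"
  define b where "b = arctan (pp z - qq z)"
  have a: "\<bar>a\<bar> < pi/2" using arctan_bounded[of "pp z + qq z"] unfolding a_def[symmetric]
    unfolding abs_less_iff by linarith
  have b: "\<bar>b\<bar> < pi/2" using arctan_bounded[of "pp z - qq z"] unfolding b_def[symmetric]
    unfolding abs_less_iff by linarith
  have "\<bar>a + b\<bar> + \<bar>a - b\<bar> < pi" using a b by linarith
  then have "\<bar>a + b\<bar> / pi + \<bar>a - b\<bar> / pi < 1" by (simp add: field_simps)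
  then show ?thesis by (simp add: diamond_def zf_def a_def[symmetric] b_def[symmetric])
qed

lemma ball_facts:
  assumes z: "norm z < 1"
  shows "1 - (Re z)^2 - (Im z)^2 > 0"
proof -
  have "(Re z)^2 + (Im z)^2 = (norm z)^2" by (simp add: cmod_power2)
  also have "\<dots> < 1" using z by (simp add: power_less_one_iff abs_less_iff)
  finally show ?thesis by simp
qed

lemma gf_zf:
  assumes z: "norm z < 1"
  shows "gf (zf z) = z"
proof -
  define p where "p = pp z"
  define q where "q = qq z"
  define D where "D = 1 - (Re z)^2 - (Im z)^2"
  have D: "D > 0" using ball_facts[OF z] by (simp add: D_def)
  have A: "gA (zf z) = p + q"
  proof -
    have "pi * (Re (zf z) + Im (zf z)) / 2 = arctan (p + q)"
      by (simp add: zf_def p_def q_def field_simps)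
    then show ?thesis by (simp add: gA_def tan_arctan)
  qed
  have B: "gB (zf z) = p - q"
  proof -
    have "pi * (Re (zf z) - Im (zf z)) / 2 = arctan (p - q)"
      by (simp add: zf_def p_def q_def field_simps)
    then show ?thesis by (simp add: gB_def tan_arctan)
  qed
  have P: "(gA (zf z) + gB (zf z))/2 = p" and Q: "(gA (zf z) - gB (zf z))/2 = q"
    unfolding A B by simp_all
  have m: "gm (zf z) = (1 + (Re z)^2 + (Im z)^2) / D"
  proof -
    have "1 + 2*(p^2 + q^2) = ((1 + (Re z)^2 + (Im z)^2) / D)^2"
    proof -
      have s2: "(sqrt 2)^2 = (2::real)" by simp
      have "1 + 2*(p^2 + q^2) = 1 + 4*((Re z)^2 + (Im z)^2)/D^2"
        unfolding p_def q_def pp_def qq_def D_def[symmetric]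
        by (simp add: power_divide power_mult_distrib add_divide_distrib)
      also have "\<dots> = (D^2 + 4*((Re z)^2 + (Im z)^2))/D^2" using D by (simp add: add_divide_distrib)
      also have "D^2 + 4*((Re z)^2 + (Im z)^2) = (1 + (Re z)^2 + (Im z)^2)^2"
        unfolding D_def by (simp add: power2_eq_square algebra_simps)
      finally show ?thesis by (simp add: power_divide)
    qed
    moreover have "(1 + (Re z)^2 + (Im z)^2) / D \<ge> 0" using D by (simp add: add_nonneg_nonneg)
    ultimately show ?thesis unfolding gm_def P Q using D by simp
  qed
  have m1: "1 + gm (zf z) = 2 / D"
    unfolding m using D by (simp add: D_def field_simps)
  have "Re (gf (zf z)) = Re z"
    unfolding gf_def using D by (simp add: P m1 p_def pp_def D_def[symmetric])
  moreover have "Im (gf (zf z)) = Im z"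
    unfolding gf_def using D by (simp add: Q m1 q_def qq_def D_def[symmetric])
  ultimately show ?thesis by (simp add: complex_eq_iff)
qed

lemma gf_facts:
  assumes w: "w \<in> diamond"
  shows "norm (gf w) < 1" "zf (gf w) = w"
proof -
  define P where "P = (gA w + gB w)/2"
  define Q where "Q = (gA w - gB w)/2"
  define m where "m = gm w"
  have m: "m = sqrt (1 + 2*(P^2 + Q^2))" by (simp add: m_def gm_def P_def Q_def)
  have m1: "m \<ge> 1" unfolding m by simp
  have mm: "m^2 = 1 + 2*(P^2 + Q^2)" unfolding m by (simp add: add_nonneg_nonneg)
  have s2: "(sqrt 2)^2 = (2::real)" by simp
  have ReI: "Re (gf w) = sqrt 2 * P / (1 + m)" "Im (gf w) = sqrt 2 * Q / (1 + m)"
    by (simp_all add: gf_def P_def Q_def m_def)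
  have n: "(Re (gf w))^2 + (Im (gf w))^2 = (m - 1)/(m + 1)"
  proof -
    have "(Re (gf w))^2 + (Im (gf w))^2 = 2*(P^2 + Q^2)/(1+m)^2"
      unfolding ReI by (simp add: power_divide power_mult_distrib add_divide_distrib)
    also have "\<dots> = (m^2 - 1)/(1+m)^2" using mm by simp
    also have "\<dots> = ((m - 1)*(m+1))/((m+1)*(m+1))" by (simp add: power2_eq_square algebra_simps)
    also have "\<dots> = (m - 1)/(m + 1)" using m1 by simp
    finally show ?thesis .
  qed
  have n1: "(m - 1)/(m + 1) < 1" using m1 by simp
  have "(norm (gf w))^2 < 1" using n n1 by (simp add: cmod_power2)
  then show "norm (gf w) < 1" by (simp add: power_less_one_iff abs_less_iff)
  have Dm: "1 - (Re (gf w))^2 - (Im (gf w))^2 = 2 / (m + 1)"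
  proof -
    have "1 - (Re (gf w))^2 - (Im (gf w))^2 = 1 - (m - 1)/(m + 1)" using n by linarith
    also have "\<dots> = 2 / (m + 1)" using m1 by (simp add: field_simps)
    finally show ?thesis .
  qed
  have pp: "pp (gf w) = P"
    unfolding pp_def Dm using m1 by (simp add: ReI field_simps)
  have qq: "qq (gf w) = Q"
    unfolding qq_def Dm using m1 by (simp add: ReI field_simps)
  have dw: "\<bar>Re w\<bar> + \<bar>Im w\<bar> < 1" using w by (simp add: diamond_def)
  have r1: "-1 < Re w + Im w" "Re w + Im w < 1" "-1 < Re w - Im w" "Re w - Im w < 1" using dw by arith+
  have pm: "-(pi/2) < pi * x / 2 \<and> pi * x / 2 < pi/2" if "-1 < x" "x < 1" for x
  proof -
    have "pi * x < pi * 1" "pi * (-1) < pi * x" using that pi_gt_zero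
      by (intro mult_strict_left_mono; simp)+
    then show ?thesis by simp
  qed
  have b1: "-(pi/2) < pi * (Re w + Im w) / 2" "pi * (Re w + Im w) / 2 < pi/2"
    using pm[OF r1(1,2)] by auto
  have b2: "-(pi/2) < pi * (Re w - Im w) / 2" "pi * (Re w - Im w) / 2 < pi/2"
    using pm[OF r1(3,4)] by auto
  have PQ1: "P + Q = gA w" "P - Q = gB w" by (simp_all add: P_def Q_def field_simps)
  have a1: "arctan (P + Q) = pi * (Re w + Im w) / 2"
    unfolding PQ1 gA_def using b1 by (rule arctan_tan)
  have a2: "arctan (P - Q) = pi * (Re w - Im w) / 2"
    unfolding PQ1 gB_def using b2 by (rule arctan_tan)
  show "zf (gf w) = w"
    unfolding zf_def pp qq a1 a2 by (simp add: complex_eq_iff field_simps)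
qed




lemma lin_decomp:
  assumes "linear L"
  shows "L v = of_real (Re v) * L 1 + of_real (Im v) * L \<i>"
proof -
  have v: "v = Re v *\<^sub>R 1 + Im v *\<^sub>R \<i>" by (simp add: complex_eq_iff)
  have "L v = L (Re v *\<^sub>R 1 + Im v *\<^sub>R \<i>)" using v by simp
  also have "\<dots> = Re v *\<^sub>R L 1 + Im v *\<^sub>R L \<i>" using assms by (simp add: linear_iff)
  finally show ?thesis by (simp add: scaleR_conv_of_real)
qed

lemma jac_comp:
  assumes l1: "linear L1" and l2: "linear L2"
  shows "jac_det (L1 \<circ> L2) = jac_det L1 * jac_det L2"
proof -
  have a: "L1 (L2 1) = of_real (Re (L2 1)) * L1 1 + of_real (Im (L2 1)) * L1 \<i>"
    by (rule lin_decomp[OF l1])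
  have b: "L1 (L2 \<i>) = of_real (Re (L2 \<i>)) * L1 1 + of_real (Im (L2 \<i>)) * L1 \<i>"
    by (rule lin_decomp[OF l1])
  show ?thesis unfolding jac_det_def o_def a b by (simp add: algebra_simps)
qed

lemma aux_d:
  fixes s X Y Z a b c D :: real
  assumes "D \<noteq> 0"
  shows "- (s * Z) * (inverse D * (0 - real 2 * a * X ^ (2 - 1) - real 2 * b * Y ^ (2 - 1)) * inverse D) + s * c / D
     = s * ((c * D + Z * (2 * X * a + 2 * Y * b)) / D^2)"
  using assms by (simp add: field_simps power2_eq_square)

lemma dpp:
  assumes x: "norm x < 1"
  shows "(pp has_derivative (\<lambda>h. sqrt 2 * ((Re h * (1 - (Re x)^2 - (Im x)^2) + Re x * (2 * Re x * Re h + 2 * Im x * Im h)) / (1 - (Re x)^2 - (Im x)^2)^2))) (at x)"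
proof -
  have D: "1 - (Re x)^2 - (Im x)^2 \<noteq> 0" using ball_facts[OF x] by simp
  show ?thesis
    unfolding pp_def[abs_def]
    apply (rule has_derivative_eq_rhs)
     apply (rule has_derivative_divide)
       apply (rule derivative_intros)+
    using D apply simp
    apply (rule ext)
    apply (rule aux_d[OF D])
    done
qed

lemma dqq:
  assumes x: "norm x < 1"
  shows "(qq has_derivative (\<lambda>h. sqrt 2 * ((Im h * (1 - (Re x)^2 - (Im x)^2) + Im x * (2 * Re x * Re h + 2 * Im x * Im h)) / (1 - (Re x)^2 - (Im x)^2)^2))) (at x)"
proof -
  have D: "1 - (Re x)^2 - (Im x)^2 \<noteq> 0" using ball_facts[OF x] by simp
  show ?thesis
    unfolding qq_def[abs_def]
    apply (rule has_derivative_eq_rhs)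
     apply (rule has_derivative_divide)
       apply (rule derivative_intros)+
    using D apply simp
    apply (rule ext)
    apply (rule aux_d[OF D])
    done
qed

definition Pm :: "complex \<Rightarrow> complex" where "Pm z = Complex (pp z) (qq z)"
definition Am :: "complex \<Rightarrow> complex" where
  "Am w = Complex (arctan (Re w + Im w)) (arctan (Re w - Im w))"
definition Lm :: "complex \<Rightarrow> complex" where
  "Lm w = Complex ((Re w + Im w) / pi) ((Re w - Im w) / pi)"

lemma zf_comp: "zf = (\<lambda>z. Lm (Am (Pm z)))"
  by (rule ext) (simp add: zf_def Lm_def Am_def Pm_def)

lemma jac_pos:
  assumes x: "norm x < 1"
  shows "jac_det (frechet_derivative zmap (at x)) > 0"
proof -
  define X where "X = Re x"
  define Y where "Y = Im x"
  define D where "D = 1 - X^2 - Y^2"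
  have D: "D > 0" using ball_facts[OF x] by (simp add: D_def X_def Y_def)
  define DP where "DP = (\<lambda>h. Complex (sqrt 2 * ((Re h * D + X * (2 * X * Re h + 2 * Y * Im h)) / D^2))
                                  (sqrt 2 * ((Im h * D + Y * (2 * X * Re h + 2 * Y * Im h)) / D^2)))"
  have dP: "(Pm has_derivative DP) (at x)"
    unfolding Pm_def[abs_def] DP_def D_def X_def Y_def
    by (rule complex_has_derivative[OF dpp[OF x] dqq[OF x]])
  define s where "s = Re (Pm x) + Im (Pm x)"
  define d where "d = Re (Pm x) - Im (Pm x)"
  define DA where "DA = (\<lambda>h. Complex ((Re h + Im h) * inverse (1 + s^2)) ((Re h - Im h) * inverse (1 + d^2)))"
  have dA: "(Am has_derivative DA) (at (Pm x))"
  proof -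
    have 1: "((\<lambda>w. Re w + Im w) has_derivative (\<lambda>h. Re h + Im h)) (at (Pm x))"
      by (intro derivative_intros)
    have 2: "((\<lambda>w. Re w - Im w) has_derivative (\<lambda>h. Re h - Im h)) (at (Pm x))"
      by (intro derivative_intros)
    have "((\<lambda>w. arctan (Re w + Im w)) has_derivative (\<lambda>h. (Re h + Im h) * inverse (1 + s^2))) (at (Pm x))"
      unfolding s_def by (rule DERIV_compose_FDERIV[OF DERIV_arctan 1])
    moreover have "((\<lambda>w. arctan (Re w - Im w)) has_derivative (\<lambda>h. (Re h - Im h) * inverse (1 + d^2))) (at (Pm x))"
      unfolding d_def by (rule DERIV_compose_FDERIV[OF DERIV_arctan 2])
    ultimately show ?thesis unfolding Am_def[abs_def] DA_def by (rule complex_has_derivative)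
  qed
  have dL: "(Lm has_derivative Lm) (at (Am (Pm x)))"
  proof -
    have "bounded_linear Lm"
    proof (rule bounded_linear_intro[of _ "2 / pi"])
      show "Lm (a + b) = Lm a + Lm b" for a b by (simp add: Lm_def complex_eq_iff field_simps)
      show "Lm (r *\<^sub>R a) = r *\<^sub>R Lm a" for r a by (simp add: Lm_def complex_eq_iff algebra_simps)
      show "norm (Lm a) \<le> norm a * (2 / pi)" for a
      proof -
        have "norm (Lm a) \<le> \<bar>Re (Lm a)\<bar> + \<bar>Im (Lm a)\<bar>" by (rule cmod_le)
        also have "\<dots> = (\<bar>Re a + Im a\<bar> + \<bar>Re a - Im a\<bar>) / pi" by (simp only: Lm_def complex.sel abs_divide abs_of_pos[OF pi_gt_zero] add_divide_distrib[symmetric])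
        also have "\<dots> \<le> (2 * norm a) / pi"
          using abs_Re_le_cmod[of a] abs_Im_le_cmod[of a] by (intro divide_right_mono) (auto simp: abs_le_iff)
        finally show ?thesis by (simp add: mult.commute)
      qed
    qed
    then show ?thesis by (rule bounded_linear_imp_has_derivative)
  qed
  have dzf: "(zf has_derivative (Lm \<circ> (DA \<circ> DP))) (at x)"
  proof -
    have "((Am \<circ> Pm) has_derivative (DA \<circ> DP)) (at x)" by (rule diff_chain_at[OF dP dA])
    moreover have "(Lm has_derivative Lm) (at ((Am \<circ> Pm) x))" using dL by simp
    ultimately have "((Lm \<circ> (Am \<circ> Pm)) has_derivative (Lm \<circ> (DA \<circ> DP))) (at x)" by (rule diff_chain_at)
    then show ?thesis unfolding zf_comp by (simp add: o_def)
  qed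
  have dz: "(zmap has_derivative (Lm \<circ> (DA \<circ> DP))) (at x)"
  proof (rule has_derivative_transform_within_open[OF dzf, of "ball 0 1"])
    show "x \<in> ball 0 1" using x by simp
    show "\<And>y. y \<in> ball 0 1 \<Longrightarrow> zf y = zmap y" using zmap_eq by simp
  qed simp
  have fd: "frechet_derivative zmap (at x) = Lm \<circ> (DA \<circ> DP)"
    using frechet_derivative_at[OF dz] by simp
  have linL: "linear Lm" using has_derivative_bounded_linear[OF dL] bounded_linear.linear by blast
  have linA: "linear DA" using has_derivative_bounded_linear[OF dA] bounded_linear.linear by blast
  have linP: "linear DP" using has_derivative_bounded_linear[OF dP] bounded_linear.linear by blast
  have jL: "jac_det Lm = - 2 / pi^2" by (simp add: jac_det_def Lm_def power2_eq_square)
  have jA: "jac_det DA = - 2 * (inverse (1 + s^2) * inverse (1 + d^2))"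
    by (simp add: jac_det_def DA_def)
  have jP: "jac_det DP = 2 * (D^2 + 2 * D * (X^2 + Y^2)) / (D^2 * D^2)"
  proof -
    have "jac_det DP = (sqrt 2 * ((D + 2 * X^2) / D^2)) * (sqrt 2 * ((D + 2 * Y^2) / D^2))
                     - (sqrt 2 * ((2 * X * Y) / D^2)) * (sqrt 2 * ((2 * X * Y) / D^2))"
      by (simp add: jac_det_def DP_def power2_eq_square algebra_simps)
    also have "\<dots> = 2 * ((D + 2 * X^2) * (D + 2 * Y^2) - (2*X*Y) * (2*X*Y)) / (D^2 * D^2)"
      using D by (simp add: field_simps power2_eq_square)
    also have "\<dots> = 2 * (D^2 + 2 * D * (X^2 + Y^2)) / (D^2 * D^2)"
      by (simp add: power2_eq_square algebra_simps)
    finally show ?thesis .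
  qed
  have "jac_det DP > 0" unfolding jP using D
    by (intro divide_pos_pos mult_pos_pos) (auto intro!: add_pos_nonneg)
  moreover have "jac_det DA < 0" unfolding jA
    by (simp add: add_pos_nonneg)
  moreover have "jac_det Lm < 0" unfolding jL by simp
  ultimately have "jac_det Lm * (jac_det DA * jac_det DP) > 0"
    by (simp add: mult_neg_neg mult_neg_pos)
  then show ?thesis unfolding fd jac_comp[OF linL linear_compose[OF linP linA]] jac_comp[OF linA linP] .
qed




lemma sm_minus: "sm S f \<Longrightarrow> sm S (\<lambda>z. - f z)"
proof -
  assume f: "sm S f"
  have "sm S (\<lambda>z. (\<lambda>z. -1) z * f z)" by (intro sm_mult sm_const f)
  then show ?thesis by (rule sm_cong) simp
qed

lemma sm_diff: "sm S f \<Longrightarrow> sm S g \<Longrightarrow> sm S (\<lambda>z. f z - g z)"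
proof -
  assume f: "sm S f" and g: "sm S g"
  have "sm S (\<lambda>z. f z + - g z)" by (intro sm_add f sm_minus g)
  then show ?thesis by (rule sm_cong) simp
qed

lemma sm_divide: "sm S f \<Longrightarrow> sm S g \<Longrightarrow> \<forall>z\<in>S. g z \<noteq> 0 \<Longrightarrow> sm S (\<lambda>z. f z / g z)"
proof -
  assume f: "sm S f" and g: "sm S g" and nz: "\<forall>z\<in>S. g z \<noteq> 0"
  have "sm S (\<lambda>z. f z * inverse (g z))" by (intro sm_mult f sm_inverse g nz)
  then show ?thesis by (rule sm_cong) (simp add: divide_inverse)
qed

lemma sm_power2: "sm S f \<Longrightarrow> sm S (\<lambda>z. (f z)^2)"
proof -
  assume f: "sm S f"
  have "sm S (\<lambda>z. f z * f z)" by (intro sm_mult f)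
  then show ?thesis by (rule sm_cong) (simp add: power2_eq_square)
qed

lemma sm_pp: "sm (ball 0 1) pp"
  unfolding pp_def[abs_def]
  by (intro sm_divide sm_mult sm_const sm_Re sm_diff sm_power2 sm_Im)
     (use ball_facts in force)

lemma sm_qq: "sm (ball 0 1) qq"
  unfolding qq_def[abs_def]
  by (intro sm_divide sm_mult sm_const sm_Im sm_diff sm_power2 sm_Re)
     (use ball_facts in force)

lemma diamond_bounds:
  assumes w: "w \<in> diamond"
  shows "-(pi/2) < pi * (Re w + Im w) / 2" "pi * (Re w + Im w) / 2 < pi/2"
        "-(pi/2) < pi * (Re w - Im w) / 2" "pi * (Re w - Im w) / 2 < pi/2"
proof -
  have dw: "\<bar>Re w\<bar> + \<bar>Im w\<bar> < 1" using w by (simp add: diamond_def)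
  have r1: "-1 < Re w + Im w" "Re w + Im w < 1" "-1 < Re w - Im w" "Re w - Im w < 1" using dw by arith+
  have pm: "-(pi/2) < pi * x / 2 \<and> pi * x / 2 < pi/2" if "-1 < x" "x < 1" for x
  proof -
    have "pi * x < pi * 1" "pi * (-1) < pi * x" using that pi_gt_zero
      by (intro mult_strict_left_mono; simp)+
    then show ?thesis by simp
  qed
  show "-(pi/2) < pi * (Re w + Im w) / 2" "pi * (Re w + Im w) / 2 < pi/2"
    using pm[OF r1(1,2)] by auto
  show "-(pi/2) < pi * (Re w - Im w) / 2" "pi * (Re w - Im w) / 2 < pi/2"
    using pm[OF r1(3,4)] by auto
qed

lemma cos_nz:
  assumes "w \<in> diamond"
  shows "cos (pi * (Re w + Im w) / 2) \<noteq> 0" "cos (pi * (Re w - Im w) / 2) \<noteq> 0"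
  using cos_gt_zero_pi[OF diamond_bounds(1,2)[OF assms]] cos_gt_zero_pi[OF diamond_bounds(3,4)[OF assms]]
  by auto

lemma sm_gA: "sm diamond gA"
  unfolding gA_def[abs_def]
  apply (intro sm_tan sm_divide sm_mult sm_const sm_add sm_Re sm_Im)
  by (auto simp: cos_nz)

lemma sm_gB: "sm diamond gB"
  unfolding gB_def[abs_def]
  apply (intro sm_tan sm_divide sm_mult sm_const sm_diff sm_Re sm_Im)
  by (auto simp: cos_nz)

lemma sm_gm: "sm diamond gm"
  unfolding gm_def[abs_def]
  apply (intro sm_sqrt sm_add sm_mult sm_const sm_power2 sm_divide sm_diff sm_gA sm_gB)
  by (auto intro!: add_pos_nonneg)

lemma open_diamond: "open diamond"
  unfolding diamond_def
  by (intro open_Collect_less continuous_intros)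

theorem mainTheorem9:
  shows "orientation_preserving_diffeo zmap (ball 0 1) diamond"
proof -
  have zb: "zmap z = zf z" if "z \<in> ball 0 1" for z using that zmap_eq by simp
  have bij: "bij_betw zmap (ball 0 1) diamond"
  proof (rule bij_betw_byWitness[where f'=gf])
    show "\<forall>a\<in>ball 0 1. gf (zmap a) = a" using zb gf_zf by simp
    show "\<forall>a'\<in>diamond. zmap (gf a') = a'" using gf_facts zmap_eq by simp
    show "zmap ` ball 0 1 \<subseteq> diamond" using zb zf_in_diamond by auto
    show "gf ` diamond \<subseteq> ball 0 1" using gf_facts by auto
  qed
  have inv: "inv_into (ball 0 1) zmap w = gf w" if w: "w \<in> diamond" for w
  proof (rule inv_into_f_eq)
    show "inj_on zmap (ball 0 1)" using bij by (simp add: bij_betw_def)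
    show "gf w \<in> ball 0 1" using gf_facts[OF w] by simp
    show "zmap (gf w) = w" using gf_facts[OF w] zmap_eq by simp
  qed
  have s1: "smooth_on (ball 0 1) zmap"
  proof (rule sm_smooth_on)
    have "sm (ball 0 1) (\<lambda>z. (arctan (pp z + qq z) + arctan (pp z - qq z)) / pi)"
      by (intro sm_divide sm_add sm_diff sm_arctan sm_pp sm_qq sm_const) simp
    then show "sm (ball 0 1) (\<lambda>z. Re (zmap z))" by (rule sm_cong) (simp add: zb zf_def)
    have "sm (ball 0 1) (\<lambda>z. (arctan (pp z + qq z) - arctan (pp z - qq z)) / pi)"
      by (intro sm_divide sm_add sm_diff sm_arctan sm_pp sm_qq sm_const) simp
    then show "sm (ball 0 1) (\<lambda>z. Im (zmap z))" by (rule sm_cong) (simp add: zb zf_def)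
  qed simp
  have gm0: "\<forall>w\<in>diamond. 1 + gm w \<noteq> 0"
  proof
    fix w have "gm w \<ge> 0" by (simp add: gm_def)
    then show "1 + gm w \<noteq> 0" by linarith
  qed
  have s2: "smooth_on diamond (inv_into (ball 0 1) zmap)"
  proof (rule sm_smooth_on[OF open_diamond])
    have "sm diamond (\<lambda>w. sqrt 2 * ((gA w + gB w)/2) / (1 + gm w))"
      by (intro sm_divide sm_mult sm_const sm_add sm_gA sm_gB sm_gm gm0) auto
    then show "sm diamond (\<lambda>w. Re (inv_into (ball 0 1) zmap w))" by (rule sm_cong) (simp add: inv gf_def)
    have "sm diamond (\<lambda>w. sqrt 2 * ((gA w - gB w)/2) / (1 + gm w))"
      by (intro sm_divide sm_mult sm_const sm_add sm_diff sm_gA sm_gB sm_gm gm0) auto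
    then show "sm diamond (\<lambda>w. Im (inv_into (ball 0 1) zmap w))" by (rule sm_cong) (simp add: inv gf_def)
  qed
  have j: "\<forall>x\<in>ball 0 1. jac_det (frechet_derivative zmap (at x)) > 0"
    using jac_pos by simp
  show ?thesis unfolding orientation_preserving_diffeo_def using bij s1 s2 j by blast
qed


end
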